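(* For all $p,\alpha\in(0,1)$ there exists $\varepsilon_0>0$ such that for every $0<\varepsilon\le\varepsilon_0$ there exists $n_0$ such that the following holds. Suppose $G$ is a graph on $n\ge n_0$ vertices in which every vertex has even degree, $G$ is lower-$(p,\varepsilon)$-regular and $\delta(G)\ge\alpha n$. Then there is an orientation $G'$ of $G$ such that $G'$ is Eulerian (i.e. $d^+_{G'}(v)=d^-_{G'}(v)$ for all $v$) and lower-$(p/4,\varepsilon)$-regular.
   Context: For $0<\varepsilon,p<1$, a graph (resp. digraph) $G$ on $n$ vertices is lower-$(p,\varepsilon)$-regular if $e_G(S,T)\ge(p-\varepsilon)|S||T|$ for all disjoint $S,T\subseteq V(G)$ with $|S|,|T|\ge\varepsilon n$, where $e_G(S,T)$ counts edges between $S$ and $T$ (resp. directed from $S$ to $T$). *)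

theory Defs
  imports Complex_Main
begin

definition graph :: "'a set \<Rightarrow> ('a \<Rightarrow> 'a \<Rightarrow> bool) \<Rightarrow> bool" where
  "graph V E \<longleftrightarrow> finite V \<and> (\<forall>u v. E u v \<longrightarrow> u \<in> V \<and> v \<in> V \<and> u \<noteq> v \<and> E v u)"

definition degree :: "'a set \<Rightarrow> ('a \<Rightarrow> 'a \<Rightarrow> bool) \<Rightarrow> 'a \<Rightarrow> nat" where
  "degree V E v = card {u \<in> V. E v u}"

definition out_degree :: "'a set \<Rightarrow> ('a \<Rightarrow> 'a \<Rightarrow> bool) \<Rightarrow> 'a \<Rightarrow> nat" where
  "out_degree V D v = card {u \<in> V. D v u}"

definition in_degree :: "'a set \<Rightarrow> ('a \<Rightarrow> 'a \<Rightarrow> bool) \<Rightarrow> 'a \<Rightarrow> nat" where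
  "in_degree V D v = card {u \<in> V. D u v}"

text \<open>e(S,T): number of pairs (s,t) in S x T with an edge (resp. arc from s to t).
  For disjoint S, T in a graph this counts the edges between S and T.\<close>
definition e_count :: "('a \<Rightarrow> 'a \<Rightarrow> bool) \<Rightarrow> 'a set \<Rightarrow> 'a set \<Rightarrow> nat" where
  "e_count R S T = card {(s, t). s \<in> S \<and> t \<in> T \<and> R s t}"

definition lower_regular :: "'a set \<Rightarrow> ('a \<Rightarrow> 'a \<Rightarrow> bool) \<Rightarrow> real \<Rightarrow> real \<Rightarrow> bool" where
  "lower_regular V R p eps \<longleftrightarrow>
     (\<forall>S T. S \<subseteq> V \<longrightarrow> T \<subseteq> V \<longrightarrow> S \<inter> T = {} \<longrightarrow>
        real (card S) \<ge> eps * real (card V) \<longrightarrow> real (card T) \<ge> eps * real (card V) \<longrightarrow>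
        real (e_count R S T) \<ge> (p - eps) * real (card S) * real (card T))"

definition orientation :: "('a \<Rightarrow> 'a \<Rightarrow> bool) \<Rightarrow> ('a \<Rightarrow> 'a \<Rightarrow> bool) \<Rightarrow> bool" where
  "orientation E D \<longleftrightarrow> (\<forall>u v. (E u v \<longleftrightarrow> D u v \<or> D v u) \<and> \<not> (D u v \<and> D v u))"

end

theory Submission
  imports Defs
begin



definition pathP :: "'a set \<Rightarrow> ('a \<Rightarrow> 'a \<Rightarrow> bool) \<Rightarrow> 'a list \<Rightarrow> bool" where
  "pathP V E xs \<longleftrightarrow> distinct xs \<and> set xs \<subseteq> V \<and> xs \<noteq> [] \<and>
     (\<forall>i. Suc i < length xs \<longrightarrow> E (xs!i) (xs!Suc i))"

lemma suc_mod_inj: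
  fixes i i' L :: nat
  assumes "i < L" "i' < L" "Suc i mod L = Suc i' mod L"
  shows "i = i'"
proof -
  have a: "Suc i mod L = (if Suc i = L then 0 else Suc i)" using assms(1) by (cases "Suc i = L") auto
  have b: "Suc i' mod L = (if Suc i' = L then 0 else Suc i')" using assms(2) by (cases "Suc i' = L") auto
  have "(if Suc i = L then 0 else Suc i) = (if Suc i' = L then (0::nat) else Suc i')"
    using assms(3) unfolding a b .
  then show ?thesis by (auto split: if_splits)
qed

lemma card_one_if:
  assumes "finite A" "x \<in> A" "\<And>y. y \<in> A \<Longrightarrow> y = x"
  shows "card A = 1"
proof -
  have "A = {x}" using assms by blast
  then show ?thesis by simp
qed

lemma cycle_exists:
  assumes g: "graph V E" and ev: "\<forall>v\<in>V. even (degree V E v)" and e: "E u0 v0"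
  shows "\<exists>c. (\<forall>u v. c u v \<longrightarrow> E u v) \<and> (\<exists>u v. c u v) \<and> (\<forall>u v. \<not>(c u v \<and> c v u)) \<and>
     (\<forall>v u u'. c v u \<and> c v u' \<longrightarrow> u = u') \<and> (\<forall>v u u'. c u v \<and> c u' v \<longrightarrow> u = u') \<and>
     (\<forall>v\<in>V. card {u\<in>V. c v u} = card {u\<in>V. c u v})"
proof -
  have fin: "finite V" and gE: "\<And>u v. E u v \<Longrightarrow> u \<in> V \<and> v \<in> V \<and> u \<noteq> v \<and> E v u"
    using g unfolding graph_def by auto
  have p0: "pathP V E [u0, v0]" using gE[OF e] e unfolding pathP_def
    by (auto simp: less_Suc_eq)
  have bnd: "\<forall>y. (\<exists>ys. pathP V E ys \<and> length ys = y) \<longrightarrow> y \<le> card V"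
  proof (intro allI impI)
    fix y assume "\<exists>ys. pathP V E ys \<and> length ys = y"
    then obtain ys where "pathP V E ys" "length ys = y" by blast
    then show "y \<le> card V" unfolding pathP_def
      by (metis card_mono distinct_card fin)
  qed
  obtain k where k: "\<exists>ys. pathP V E ys \<and> length ys = k"
     and kmax: "\<forall>y. (\<exists>ys. pathP V E ys \<and> length ys = y) \<longrightarrow> y \<le> k"
    using Nat.ex_has_greatest_nat[of "\<lambda>y. \<exists>ys. pathP V E ys \<and> length ys = y", OF _ bnd] p0 by blast
  obtain xs where xsP: "pathP V E xs" and xsl: "length xs = k" using k by blast
  have max: "\<And>ys. pathP V E ys \<Longrightarrow> length ys \<le> length xs" using kmax xsl by blast
  have len2: "2 \<le> length xs" using max[OF p0] by simp
  have dist: "distinct xs" and sub: "set xs \<subseteq> V"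
    and cons: "\<And>i. Suc i < length xs \<Longrightarrow> E (xs!i) (xs!Suc i)"
    using xsP unfolding pathP_def by auto
  define x where "x = xs!0"
  have nb: "\<And>w. E x w \<Longrightarrow> w \<in> set xs"
  proof (rule ccontr)
    fix w assume Ew: "E x w" and nw: "w \<notin> set xs"
    have "pathP V E (w # xs)" unfolding pathP_def
    proof (intro conjI allI impI)
      show "distinct (w # xs)" using dist nw by simp
      show "set (w # xs) \<subseteq> V" using sub gE[OF Ew] by auto
      show "w # xs \<noteq> []" by simp
      fix i assume i: "Suc i < length (w # xs)"
      show "E ((w # xs) ! i) ((w # xs) ! Suc i)"
      proof (cases i)
        case 0 then show ?thesis using gE[OF Ew] x_def by simp
      next
        case (Suc j) then show ?thesis using cons i by simp
      qed
    qed
    from max[OF this] show False by simp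
  qed
  have x1: "E x (xs!1)" using cons[of 0] len2 x_def by simp
  have xV: "x \<in> V" using gE[OF x1] by simp
  have "\<exists>w. E x w \<and> w \<noteq> xs!1"
  proof (rule ccontr)
    assume "\<not> ?thesis"
    then have "\<And>u. E x u \<Longrightarrow> u = xs!1" by blast
    then have "{u\<in>V. E x u} = {xs!1}" using x1 gE[OF x1] by blast
    then have "degree V E x = 1" unfolding degree_def by simp
    with ev xV show False by auto
  qed
  then obtain w where Ew: "E x w" and w1: "w \<noteq> xs!1" by blast
  obtain j where j: "j < length xs" "xs!j = w" using nb[OF Ew] unfolding in_set_conv_nth by blast
  have "j \<noteq> 0"
  proof
    assume "j = 0"
    then have "w = x" using j x_def by simp
    then show False using gE[OF Ew] by simp
  qed
  moreover have "j \<noteq> 1" using w1 j by auto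
  ultimately have j2: "2 \<le> j" by simp
  define L where "L = Suc j"
  have L3: "3 \<le> L" and Lle: "L \<le> length xs" using j2 j unfolding L_def by auto
  define c where "c = (\<lambda>u v. \<exists>i<L. u = xs!i \<and> v = xs!(Suc i mod L))"
  have nthinj: "\<And>i i'. i < L \<Longrightarrow> i' < L \<Longrightarrow> xs!i = xs!i' \<Longrightarrow> i = i'"
    using dist Lle by (simp add: nth_eq_iff_index_eq)
  have modlt: "\<And>i. Suc i mod L < L" using L3 by simp
  have cE: "\<forall>u v. c u v \<longrightarrow> E u v"
  proof (intro allI impI)
    fix u v assume "c u v"
    then obtain i where i: "i < L" "u = xs!i" "v = xs!(Suc i mod L)" unfolding c_def by blast
    show "E u v"
    proof (cases "Suc i < L")
      case True
      then have "Suc i mod L = Suc i" by simp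
      then show ?thesis using i cons[of i] True Lle by simp
    next
      case False
      then have "i = j" using i unfolding L_def by simp
      moreover have "Suc i mod L = 0" using \<open>i = j\<close> unfolding L_def by simp
      ultimately show ?thesis using i j gE[OF Ew] x_def by simp
    qed
  qed
  have cne: "\<exists>u v. c u v"
  proof -
    have "c (xs!0) (xs!(Suc 0 mod L))" unfolding c_def using L3 by (intro exI[of _ 0]) auto
    then show ?thesis by blast
  qed
  have cout: "\<forall>v u u'. c v u \<and> c v u' \<longrightarrow> u = u'"
  proof (intro allI impI)
    fix v u u' assume "c v u \<and> c v u'"
    then obtain i i' where "i < L" "v = xs!i" "u = xs!(Suc i mod L)"
      "i' < L" "v = xs!i'" "u' = xs!(Suc i' mod L)" unfolding c_def by blast
    then have "i = i'" using nthinj by simp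
    then show "u = u'" using \<open>u = xs!(Suc i mod L)\<close> \<open>u' = xs!(Suc i' mod L)\<close> by simp
  qed
  have cin: "\<forall>v u u'. c u v \<and> c u' v \<longrightarrow> u = u'"
  proof (intro allI impI)
    fix v u u' assume "c u v \<and> c u' v"
    then obtain i i' where "i < L" "u = xs!i" "v = xs!(Suc i mod L)"
      "i' < L" "u' = xs!i'" "v = xs!(Suc i' mod L)" unfolding c_def by blast
    then have "Suc i mod L = Suc i' mod L" using nthinj[OF modlt modlt] by simp
    then have "i = i'" using suc_mod_inj \<open>i < L\<close> \<open>i' < L\<close> by blast
    then show "u = u'" using \<open>u = xs!i\<close> \<open>u' = xs!i'\<close> by simp
  qed
  have canti: "\<forall>u v. \<not>(c u v \<and> c v u)"
  proof (intro allI notI)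
    fix u v assume "c u v \<and> c v u"
    then obtain i i' where i: "i < L" "u = xs!i" "v = xs!(Suc i mod L)"
      "i' < L" "v = xs!i'" "u = xs!(Suc i' mod L)" unfolding c_def by blast
    have e1: "i' = Suc i mod L" using nthinj[OF i(4) modlt] i by simp
    have e2: "i = Suc i' mod L" using nthinj[OF i(1) modlt] i by simp
    show False
    proof (cases "Suc i < L")
      case True
      then have "i' = Suc i" using e1 by simp
      then show False using e2 L3 i(4) by (cases "Suc i' = L") auto
    next
      case False
      then have "Suc i = L" using i(1) by simp
      then have "i' = 0" using e1 by simp
      then show False using e2 L3 \<open>Suc i = L\<close> by simp
    qed
  qed
  have cbal: "\<forall>v\<in>V. card {u\<in>V. c v u} = card {u\<in>V. c u v}"
  proof
    fix v assume vV: "v \<in> V"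
    show "card {u\<in>V. c v u} = card {u\<in>V. c u v}"
    proof (cases "\<exists>i<L. v = xs!i")
      case True
      then obtain i where i: "i < L" "v = xs!i" by blast
      have inV: "\<And>k. k < L \<Longrightarrow> xs!k \<in> V" using sub Lle by (meson less_le_trans nth_mem subsetD)
      have "card {u\<in>V. c v u} = 1"
        apply (rule card_one_if[where x="xs!(Suc i mod L)"])
        using fin apply simp
        using inV[OF modlt] i unfolding c_def apply blast
        using cout i inV[OF modlt] unfolding c_def by blast
      moreover
      define k where "k = (if i = 0 then j else i - 1)"
      have k: "k < L" "Suc k mod L = i" using i unfolding k_def L_def by auto
      have "card {u\<in>V. c u v} = 1"
        apply (rule card_one_if[where x="xs!k"])
        using fin apply simp
        using inV k i unfolding c_def apply auto[1]
        using cin i k unfolding c_def by blast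
      ultimately show ?thesis by simp
    next
      case False
      then have z1: "{u\<in>V. c v u} = {}" and z2: "{u\<in>V. c u v} = {}" unfolding c_def by auto
      show ?thesis unfolding z1 z2 by simp
    qed
  qed
  show ?thesis using cE cne canti cout cin cbal by blast
qed




definition decomp :: "'a set \<Rightarrow> ('a \<Rightarrow> 'a \<Rightarrow> bool) \<Rightarrow> nat \<Rightarrow> (nat \<Rightarrow> 'a \<Rightarrow> 'a \<Rightarrow> bool) \<Rightarrow> bool" where
  "decomp V E m a \<longleftrightarrow>
    (\<forall>i<m. \<forall>u v. a i u v \<longrightarrow> E u v) \<and>
    (\<forall>u v. E u v \<longrightarrow> (\<exists>i<m. a i u v \<or> a i v u)) \<and>
    (\<forall>i<m. \<forall>j<m. \<forall>u v. (a i u v \<or> a i v u) \<and> (a j u v \<or> a j v u) \<longrightarrow> i = j) \<and>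
    (\<forall>i<m. \<forall>u v. \<not>(a i u v \<and> a i v u)) \<and>
    (\<forall>i<m. \<forall>v u u'. a i v u \<and> a i v u' \<longrightarrow> u = u') \<and>
    (\<forall>i<m. \<forall>v u u'. a i u v \<and> a i u' v \<longrightarrow> u = u') \<and>
    (\<forall>i<m. \<forall>v\<in>V. card {u\<in>V. a i v u} = card {u\<in>V. a i u v})"

lemma decomp_exists_aux:
  "\<And>E. card {(u,v). E u v} = k \<Longrightarrow> graph V E \<Longrightarrow> (\<forall>v\<in>V. even (degree V E v)) \<Longrightarrow> \<exists>m a. decomp V E m a"
proof (induction k rule: less_induct)
  case (less k E)
  have fin: "finite V" and gE: "\<And>u v. E u v \<Longrightarrow> u \<in> V \<and> v \<in> V \<and> u \<noteq> v \<and> E v u"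
    using less.prems(2) unfolding graph_def by auto
  have finE: "finite {(u,v). E u v}"
  proof (rule finite_subset[of _ "V \<times> V"])
    show "{(u,v). E u v} \<subseteq> V \<times> V" using gE by auto
    show "finite (V \<times> V)" using fin by simp
  qed
  show ?case
  proof (cases "\<exists>u v. E u v")
    case False
    then have "decomp V E 0 (\<lambda>_ _ _. False)" unfolding decomp_def by auto
    then show ?thesis by blast
  next
    case True
    then obtain u0 v0 where e: "E u0 v0" by blast
    obtain c where cE: "\<forall>u v. c u v \<longrightarrow> E u v" and cne: "\<exists>u v. c u v"
      and canti: "\<forall>u v. \<not>(c u v \<and> c v u)"
      and cout: "\<forall>v u u'. c v u \<and> c v u' \<longrightarrow> u = u'"
      and cin: "\<forall>v u u'. c u v \<and> c u' v \<longrightarrow> u = u'"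
      and cbal: "\<forall>v\<in>V. card {u\<in>V. c v u} = card {u\<in>V. c u v}"
      using cycle_exists[OF less.prems(2) less.prems(3) e] by blast
    define E' where "E' = (\<lambda>u v. E u v \<and> \<not> c u v \<and> \<not> c v u)"
    have g': "graph V E'" using fin gE unfolding graph_def E'_def by auto
    have ev': "\<forall>v\<in>V. even (degree V E' v)"
    proof
      fix v assume vV: "v \<in> V"
      have split: "{u\<in>V. E v u} = ({u\<in>V. E' v u} \<union> {u\<in>V. c v u}) \<union> {u\<in>V. c u v}"
        unfolding E'_def using cE gE by blast
      have d1: "({u\<in>V. E' v u} \<union> {u\<in>V. c v u}) \<inter> {u\<in>V. c u v} = {}"
        unfolding E'_def using canti by blast
      have d2: "{u\<in>V. E' v u} \<inter> {u\<in>V. c v u} = {}" unfolding E'_def by blast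
      have "degree V E v = card {u\<in>V. E' v u} + card {u\<in>V. c v u} + card {u\<in>V. c u v}"
        unfolding degree_def split using fin d1 d2 by (simp add: card_Un_disjoint)
      also have "\<dots> = degree V E' v + 2 * card {u\<in>V. c v u}"
        using cbal vV unfolding degree_def by simp
      finally have eq: "degree V E v = degree V E' v + 2 * card {u\<in>V. c v u}" .
      have "even (degree V E v)" using less.prems(3) vV by blast
      then have "even (degree V E' v + 2 * card {u\<in>V. c v u})" unfolding eq .
      then show "even (degree V E' v)" by simp
    qed
    obtain u1 v1 where c1: "c u1 v1" using cne by blast
    have "{(u,v). E' u v} \<subset> {(u,v). E u v}"
    proof
      show "{(u,v). E' u v} \<subseteq> {(u,v). E u v}" unfolding E'_def by auto
      show "{(u,v). E' u v} \<noteq> {(u,v). E u v}"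
      proof
        assume "{(u,v). E' u v} = {(u,v). E u v}"
        moreover have "(u1, v1) \<in> {(u,v). E u v}" using cE c1 by simp
        moreover have "(u1, v1) \<notin> {(u,v). E' u v}" using c1 unfolding E'_def by simp
        ultimately show False by simp
      qed
    qed
    then have "card {(u,v). E' u v} < k" using psubset_card_mono[OF finE] less.prems(1) by simp
    then obtain m' a' where dec: "decomp V E' m' a'" using less.IH g' ev' by blast
    define a where "a = (\<lambda>i. if i < m' then a' i else c)"
    have D1: "\<forall>i<m'. \<forall>u v. a' i u v \<longrightarrow> E' u v"
      and D2: "\<forall>u v. E' u v \<longrightarrow> (\<exists>i<m'. a' i u v \<or> a' i v u)"
      and D3: "\<forall>i<m'. \<forall>j<m'. \<forall>u v. (a' i u v \<or> a' i v u) \<and> (a' j u v \<or> a' j v u) \<longrightarrow> i = j"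
      and D4: "\<forall>i<m'. \<forall>u v. \<not>(a' i u v \<and> a' i v u)"
      and D5: "\<forall>i<m'. \<forall>v u u'. a' i v u \<and> a' i v u' \<longrightarrow> u = u'"
      and D6: "\<forall>i<m'. \<forall>v u u'. a' i u v \<and> a' i u' v \<longrightarrow> u = u'"
      and D7: "\<forall>i<m'. \<forall>v\<in>V. card {u\<in>V. a' i v u} = card {u\<in>V. a' i u v}"
      using dec unfolding decomp_def by auto
    have "decomp V E (Suc m') a"
      unfolding decomp_def
    proof (intro conjI)
      show "\<forall>i<Suc m'. \<forall>u v. a i u v \<longrightarrow> E u v"
        using D1 cE unfolding a_def E'_def by (auto simp: less_Suc_eq)
      show "\<forall>u v. E u v \<longrightarrow> (\<exists>i<Suc m'. a i u v \<or> a i v u)"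
      proof (intro allI impI)
        fix u v assume "E u v"
        show "\<exists>i<Suc m'. a i u v \<or> a i v u"
        proof (cases "c u v \<or> c v u")
          case True then show ?thesis unfolding a_def by (intro exI[of _ m']) auto
        next
          case False
          then have "E' u v" using \<open>E u v\<close> unfolding E'_def by simp
          then obtain i where "i < m'" "a' i u v \<or> a' i v u" using D2 by blast
          then show ?thesis unfolding a_def by (intro exI[of _ i]) auto
        qed
      qed
      show "\<forall>i<Suc m'. \<forall>j<Suc m'. \<forall>u v. (a i u v \<or> a i v u) \<and> (a j u v \<or> a j v u) \<longrightarrow> i = j"
      proof (intro allI impI)
        fix i j u v assume i: "i < Suc m'" and j: "j < Suc m'"
          and h: "(a i u v \<or> a i v u) \<and> (a j u v \<or> a j v u)"
        have nc: "\<And>k. k < m' \<Longrightarrow> a' k u v \<or> a' k v u \<Longrightarrow> \<not> (c u v \<or> c v u)"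
          using D1 unfolding E'_def by blast
        show "i = j"
        proof (cases "i < m'")
          case True
          show ?thesis
          proof (cases "j < m'")
            case True
            then show ?thesis using \<open>i < m'\<close> h D3 unfolding a_def by auto
          next
            case False
            then show ?thesis using \<open>i < m'\<close> h nc unfolding a_def by auto
          qed
        next
          case False
          show ?thesis
          proof (cases "j < m'")
            case True
            then show ?thesis using \<open>\<not> i < m'\<close> h nc unfolding a_def by auto
          next
            case False
            then show ?thesis using \<open>\<not> i < m'\<close> i j by simp
          qed
        qed
      qed
      show "\<forall>i<Suc m'. \<forall>u v. \<not>(a i u v \<and> a i v u)"
        using D4 canti unfolding a_def by (auto simp: less_Suc_eq)
      show "\<forall>i<Suc m'. \<forall>v u u'. a i v u \<and> a i v u' \<longrightarrow> u = u'"
        using D5 cout unfolding a_def by (auto simp: less_Suc_eq)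
      show "\<forall>i<Suc m'. \<forall>v u u'. a i u v \<and> a i u' v \<longrightarrow> u = u'"
        using D6 cin unfolding a_def by (auto simp: less_Suc_eq)
      show "\<forall>i<Suc m'. \<forall>v\<in>V. card {u\<in>V. a i v u} = card {u\<in>V. a i u v}"
        using D7 cbal unfolding a_def by (auto simp: less_Suc_eq)
    qed
    then show ?thesis by blast
  qed
qed

lemma decomp_exists:
  "graph V E \<Longrightarrow> (\<forall>v\<in>V. even (degree V E v)) \<Longrightarrow> \<exists>m a. decomp V E m a"
  using decomp_exists_aux by blast




locale dec =
  fixes V :: "'a set" and E :: "'a \<Rightarrow> 'a \<Rightarrow> bool" and m :: nat and a :: "nat \<Rightarrow> 'a \<Rightarrow> 'a \<Rightarrow> bool"
  assumes g: "graph V E" and dc: "decomp V E m a"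
begin

lemma fin: "finite V" using g unfolding graph_def by auto
lemma gE: "E u v \<Longrightarrow> u \<in> V \<and> v \<in> V \<and> u \<noteq> v \<and> E v u" using g unfolding graph_def by auto
lemma D1: "i < m \<Longrightarrow> a i u v \<Longrightarrow> E u v" using dc unfolding decomp_def by auto
lemma D2: "E u v \<Longrightarrow> \<exists>i<m. a i u v \<or> a i v u" using dc unfolding decomp_def by auto
lemma D3: "i < m \<Longrightarrow> j < m \<Longrightarrow> a i u v \<or> a i v u \<Longrightarrow> a j u v \<or> a j v u \<Longrightarrow> i = j"
  using dc unfolding decomp_def by blast
lemma D4: "i < m \<Longrightarrow> \<not>(a i u v \<and> a i v u)" using dc unfolding decomp_def by auto
lemma D5: "i < m \<Longrightarrow> a i v u \<Longrightarrow> a i v u' \<Longrightarrow> u = u'" using dc unfolding decomp_def by blast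
lemma D6: "i < m \<Longrightarrow> a i u v \<Longrightarrow> a i u' v \<Longrightarrow> u = u'" using dc unfolding decomp_def by blast
lemma D7: "i < m \<Longrightarrow> v \<in> V \<Longrightarrow> card {u\<in>V. a i v u} = card {u\<in>V. a i u v}"
  using dc unfolding decomp_def by auto

definition cl :: "'a \<Rightarrow> 'a \<Rightarrow> nat" where
  "cl u v = (SOME i. i < m \<and> (a i u v \<or> a i v u))"

lemma cl: "E u v \<Longrightarrow> cl u v < m \<and> (a (cl u v) u v \<or> a (cl u v) v u)"
  unfolding cl_def by (rule someI_ex) (rule D2)

lemma cl_eq: "i < m \<Longrightarrow> a i u v \<or> a i v u \<Longrightarrow> cl u v = i"
proof -
  assume i: "i < m" and h: "a i u v \<or> a i v u"
  have "E u v" using h D1[OF i] gE by blast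
  from cl[OF this] show "cl u v = i" using D3 i h by blast
qed

lemma cl_sym: "cl u v = cl v u"
proof -
  have "(\<lambda>i. i < m \<and> (a i u v \<or> a i v u)) = (\<lambda>i. i < m \<and> (a i v u \<or> a i u v))" by auto
  then show ?thesis unfolding cl_def by simp
qed

definition Dor :: "nat set \<Rightarrow> 'a \<Rightarrow> 'a \<Rightarrow> bool" where
  "Dor F u v \<longleftrightarrow> E u v \<and> (a (cl u v) u v \<longleftrightarrow> cl u v \<notin> F)"

lemma Dor_orient: "orientation E (Dor F)"
  unfolding orientation_def
proof (intro allI conjI)
  fix u v
  show "E u v = (Dor F u v \<or> Dor F v u)"
  proof
    assume e: "E u v"
    then have e2: "E v u" using gE by blast
    show "Dor F u v \<or> Dor F v u"
      using cl[OF e] e e2 cl_sym[of u v] D4[of "cl u v" u v] unfolding Dor_def by auto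
  next
    assume "Dor F u v \<or> Dor F v u" then show "E u v" unfolding Dor_def using gE by blast
  qed
  show "\<not> (Dor F u v \<and> Dor F v u)"
  proof
    assume h: "Dor F u v \<and> Dor F v u"
    then have e: "E u v" unfolding Dor_def by simp
    have "\<not> (a (cl u v) u v \<and> a (cl u v) v u)" using D4 cl[OF e] by blast
    then show False using h cl_sym[of u v] cl[OF e] unfolding Dor_def by auto
  qed
qed

lemma out_set: "{u\<in>V. Dor F v u} = (\<Union>i\<in>{..<m}. if i \<notin> F then {u\<in>V. a i v u} else {u\<in>V. a i u v})"
proof (rule set_eqI)
  fix u
  show "u \<in> {u\<in>V. Dor F v u} \<longleftrightarrow> u \<in> (\<Union>i\<in>{..<m}. if i \<notin> F then {u\<in>V. a i v u} else {u\<in>V. a i u v})"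
  proof
    assume "u \<in> {u\<in>V. Dor F v u}"
    then have uV: "u \<in> V" and e: "E v u" and c: "a (cl v u) v u \<longleftrightarrow> cl v u \<notin> F"
      unfolding Dor_def by auto
    show "u \<in> (\<Union>i\<in>{..<m}. if i \<notin> F then {u\<in>V. a i v u} else {u\<in>V. a i u v})"
      using cl[OF e] c uV by (intro UN_I[of "cl v u"]) auto
  next
    assume "u \<in> (\<Union>i\<in>{..<m}. if i \<notin> F then {u\<in>V. a i v u} else {u\<in>V. a i u v})"
    then obtain i where i: "i < m" and h: "u \<in> (if i \<notin> F then {u\<in>V. a i v u} else {u\<in>V. a i u v})"
      by auto
    show "u \<in> {u\<in>V. Dor F v u}"
    proof (cases "i \<in> F")
      case False
      then have "a i v u" "u \<in> V" using h by auto
      then show ?thesis using cl_eq[OF i] D1[OF i] False unfolding Dor_def by auto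
    next
      case True
      then have au: "a i u v" "u \<in> V" using h by auto
      then have cu: "cl v u = i" using cl_eq[OF i] by blast
      have "E v u" using D1[OF i au(1)] gE by blast
      then show ?thesis using cu au D4[OF i] True unfolding Dor_def by auto
    qed
  qed
qed

lemma in_set: "{u\<in>V. Dor F u v} = (\<Union>i\<in>{..<m}. if i \<notin> F then {u\<in>V. a i u v} else {u\<in>V. a i v u})"
proof (rule set_eqI)
  fix u
  show "u \<in> {u\<in>V. Dor F u v} \<longleftrightarrow> u \<in> (\<Union>i\<in>{..<m}. if i \<notin> F then {u\<in>V. a i u v} else {u\<in>V. a i v u})"
  proof
    assume "u \<in> {u\<in>V. Dor F u v}"
    then have uV: "u \<in> V" and e: "E u v" and c: "a (cl u v) u v \<longleftrightarrow> cl u v \<notin> F"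
      unfolding Dor_def by auto
    show "u \<in> (\<Union>i\<in>{..<m}. if i \<notin> F then {u\<in>V. a i u v} else {u\<in>V. a i v u})"
      using cl[OF e] c uV by (intro UN_I[of "cl u v"]) auto
  next
    assume "u \<in> (\<Union>i\<in>{..<m}. if i \<notin> F then {u\<in>V. a i u v} else {u\<in>V. a i v u})"
    then obtain i where i: "i < m" and h: "u \<in> (if i \<notin> F then {u\<in>V. a i u v} else {u\<in>V. a i v u})"
      by auto
    show "u \<in> {u\<in>V. Dor F u v}"
    proof (cases "i \<in> F")
      case False
      then have "a i u v" "u \<in> V" using h by auto
      then show ?thesis using cl_eq[OF i] D1[OF i] False unfolding Dor_def by auto
    next
      case True
      then have au: "a i v u" "u \<in> V" using h by auto
      then have cu: "cl u v = i" using cl_eq[OF i] by blast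
      have "E u v" using D1[OF i au(1)] gE by blast
      then show ?thesis using cu au D4[OF i] True unfolding Dor_def by auto
    qed
  qed
qed

lemma Dor_euler: "v \<in> V \<Longrightarrow> out_degree V (Dor F) v = in_degree V (Dor F) v"
proof -
  assume vV: "v \<in> V"
  define X where "X = (\<lambda>i. if i \<notin> F then {u\<in>V. a i v u} else {u\<in>V. a i u v})"
  define Y where "Y = (\<lambda>i. if i \<notin> F then {u\<in>V. a i u v} else {u\<in>V. a i v u})"
  have dX: "\<forall>i\<in>{..<m}. \<forall>j\<in>{..<m}. i \<noteq> j \<longrightarrow> X i \<inter> X j = {}"
  proof (intro ballI impI)
    fix i j assume i: "i \<in> {..<m}" and j: "j \<in> {..<m}" and ij: "i \<noteq> j"
    show "X i \<inter> X j = {}"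
    proof (rule ccontr)
      assume "X i \<inter> X j \<noteq> {}"
      then obtain u where "u \<in> X i" "u \<in> X j" by blast
      then have "a i v u \<or> a i u v" "a j v u \<or> a j u v" unfolding X_def by (auto split: if_splits)
      then show False using D3[of i j v u] i j ij by auto
    qed
  qed
  have dY: "\<forall>i\<in>{..<m}. \<forall>j\<in>{..<m}. i \<noteq> j \<longrightarrow> Y i \<inter> Y j = {}"
  proof (intro ballI impI)
    fix i j assume i: "i \<in> {..<m}" and j: "j \<in> {..<m}" and ij: "i \<noteq> j"
    show "Y i \<inter> Y j = {}"
    proof (rule ccontr)
      assume "Y i \<inter> Y j \<noteq> {}"
      then obtain u where "u \<in> Y i" "u \<in> Y j" by blast
      then have "a i v u \<or> a i u v" "a j v u \<or> a j u v" unfolding Y_def by (auto split: if_splits)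
      then show False using D3[of i j v u] i j ij by auto
    qed
  qed
  have "out_degree V (Dor F) v = (\<Sum>i<m. card (X i))"
    unfolding out_degree_def out_set X_def[symmetric]
    by (rule card_UN_disjoint) (use fin dX in \<open>auto simp: X_def\<close>)
  also have "\<dots> = (\<Sum>i<m. card (Y i))"
    by (rule sum.cong) (use D7 vV in \<open>auto simp: X_def Y_def\<close>)
  also have "\<dots> = in_degree V (Dor F) v"
    unfolding in_degree_def in_set Y_def[symmetric]
    by (rule card_UN_disjoint[symmetric]) (use fin dY in \<open>auto simp: Y_def\<close>)
  finally show ?thesis .
qed

end



definition chi :: "nat set \<Rightarrow> nat \<Rightarrow> real" where
  "chi F i = (if i \<in> F then -1 else 1)"

lemma chi_flip: "x \<notin> F \<Longrightarrow>
  prod_list (map (chi (insert x F)) cs) = (-1)^(count_list cs x) * prod_list (map (chi F) cs)"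
  by (induction cs) (auto simp: chi_def)

lemma abs_prod_chi: "\<bar>prod_list (map (chi F) cs)\<bar> = 1"
  by (induction cs) (auto simp: chi_def abs_mult)

definition W :: "nat \<Rightarrow> nat list \<Rightarrow> real" where
  "W m cs = (\<Sum>F\<in>Pow {..<m}. prod_list (map (chi F) cs))"

lemma W_abs: "\<bar>W m cs\<bar> \<le> 2^m"
proof -
  have "\<bar>W m cs\<bar> \<le> (\<Sum>F\<in>Pow {..<m}. \<bar>prod_list (map (chi F) cs)\<bar>)"
    unfolding W_def by (rule sum_abs)
  also have "\<dots> = 2^m" by (simp add: abs_prod_chi card_Pow)
  finally show ?thesis .
qed

lemma W_zero:
  assumes x: "x < m" and odd: "odd (count_list cs x)"
  shows "W m cs = 0"
proof -
  define J where "J = {..<m} - {x}"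
  have xJ: "x \<notin> J" and IJ: "{..<m} = insert x J" using x unfolding J_def by auto
  have finJ: "finite J" unfolding J_def by simp
  define g where "g = (\<lambda>F. prod_list (map (chi F) cs))"
  have disj: "Pow J \<inter> insert x ` Pow J = {}" using xJ by auto
  have inj: "inj_on (insert x) (Pow J)"
  proof (rule inj_onI)
    fix A B assume A: "A \<in> Pow J" and B: "B \<in> Pow J" and h: "insert x A = insert x B"
    have "x \<notin> A" "x \<notin> B" using A B xJ by auto
    then show "A = B" using h by (metis Diff_insert_absorb)
  qed
  have "W m cs = sum g (Pow J \<union> insert x ` Pow J)"
    unfolding W_def g_def IJ Pow_insert ..
  also have "\<dots> = sum g (Pow J) + sum g (insert x ` Pow J)"
    by (rule sum.union_disjoint) (use finJ disj in auto)
  also have "sum g (insert x ` Pow J) = sum (g \<circ> insert x) (Pow J)"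
    by (rule sum.reindex[OF inj])
  also have "\<dots> = sum (\<lambda>F. - g F) (Pow J)"
  proof (rule sum.cong[OF refl])
    fix F assume "F \<in> Pow J"
    then have "x \<notin> F" using xJ by auto
    then show "(g \<circ> insert x) F = - g F" using odd unfolding g_def
      by (simp add: chi_flip)
  qed
  finally show ?thesis by (simp add: sum_negf)
qed

lemma paired4:
  fixes c1 c2 c3 c4 :: nat
  assumes "\<not> ((c1 = c2 \<and> c3 = c4) \<or> (c1 = c3 \<and> c2 = c4) \<or> (c1 = c4 \<and> c2 = c3))"
  shows "\<exists>x\<in>{c1,c2,c3,c4}. odd (count_list [c1,c2,c3,c4] x)"
  using assms by auto




lemma sum_le_const:
  fixes f :: "'b \<Rightarrow> real"
  assumes "\<And>x. x \<in> A \<Longrightarrow> f x \<le> c"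
  shows "sum f A \<le> real (card A) * c"
proof -
  have "sum f A \<le> sum (\<lambda>_. c) A" by (rule sum_mono) (use assms in auto)
  then show ?thesis by simp
qed

context dec begin

definition bb :: "'a \<Rightarrow> 'a \<Rightarrow> real" where
  "bb u v = (if E u v then (if a (cl u v) u v then 1 else -1) else 0)"

definition AA :: "nat set \<Rightarrow> 'a \<Rightarrow> 'a \<Rightarrow> real" where
  "AA F u v = (if Dor F u v then 1 else 0) - (if Dor F v u then 1 else 0)"

lemma AA_eq: "AA F u v = chi F (cl u v) * bb u v"
proof (cases "E u v")
  case False
  then have "\<not> E v u" using gE by blast
  then show ?thesis using False unfolding AA_def bb_def Dor_def by simp
next
  case True
  then have e2: "E v u" using gE by blast
  have c: "cl u v < m" "a (cl u v) u v \<or> a (cl u v) v u" using cl[OF True] by auto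
  have d4: "\<not> (a (cl u v) u v \<and> a (cl u v) v u)" using D4[OF c(1)] by blast
  show ?thesis using True e2 c d4 cl_sym[of u v] unfolding AA_def bb_def Dor_def chi_def by auto
qed

lemma bb_abs: "\<bar>bb u v\<bar> \<le> 1" unfolding bb_def by auto

lemma bb_zero: "\<not> E u v \<Longrightarrow> bb u v = 0" unfolding bb_def by simp

definition Phi :: "nat set \<Rightarrow> real" where
  "Phi F = (\<Sum>t\<in>V. \<Sum>t'\<in>V. (\<Sum>s\<in>V. AA F s t * AA F s t')^2)"

definition BB :: "'a \<Rightarrow> 'a \<Rightarrow> 'a \<Rightarrow> 'a \<Rightarrow> real" where
  "BB t t' s s' = bb s t * bb s t' * bb s' t * bb s' t'"

definition CL :: "'a \<Rightarrow> 'a \<Rightarrow> 'a \<Rightarrow> 'a \<Rightarrow> nat list" where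
  "CL t t' s s' = [cl s t, cl s t', cl s' t, cl s' t']"

lemma Phi_expand: "Phi F = (\<Sum>t\<in>V. \<Sum>t'\<in>V. \<Sum>s\<in>V. \<Sum>s'\<in>V.
   prod_list (map (chi F) (CL t t' s s')) * BB t t' s s')"
proof -
  have "Phi F = (\<Sum>t\<in>V. \<Sum>t'\<in>V. \<Sum>s\<in>V. \<Sum>s'\<in>V. (AA F s t * AA F s t') * (AA F s' t * AA F s' t'))"
    unfolding Phi_def power2_eq_square sum_product ..
  also have "\<dots> = (\<Sum>t\<in>V. \<Sum>t'\<in>V. \<Sum>s\<in>V. \<Sum>s'\<in>V.
   prod_list (map (chi F) (CL t t' s s')) * BB t t' s s')"
    unfolding AA_eq CL_def BB_def by (simp add: algebra_simps)
  finally show ?thesis .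
qed

lemma swap5:
  "(\<Sum>F\<in>P. \<Sum>t\<in>A. \<Sum>t'\<in>A. \<Sum>s\<in>A. \<Sum>s'\<in>A. f F t t' s s') =
   (\<Sum>t\<in>A. \<Sum>t'\<in>A. \<Sum>s\<in>A. \<Sum>s'\<in>A. \<Sum>F\<in>P. f F t t' s s')"
  apply (subst sum.swap[where A=P])
  apply (rule sum.cong[OF refl])
  apply (subst sum.swap[where A=P])
  apply (rule sum.cong[OF refl])
  apply (subst sum.swap[where A=P])
  apply (rule sum.cong[OF refl])
  apply (subst sum.swap[where A=P])
  apply (rule refl)
  done

definition ind :: "bool \<Rightarrow> real" where "ind P = (if P then 1 else 0)"

lemma nbr2: "(\<Sum>y\<in>V. ind (E x y \<and> cl x y = i)) \<le> 2"
proof -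
  have "(\<Sum>y\<in>V. ind (E x y \<and> cl x y = i)) = real (card {y\<in>V. E x y \<and> cl x y = i})"
    unfolding ind_def using fin by (simp add: sum.inter_filter[symmetric])
  also have "card {y\<in>V. E x y \<and> cl x y = i} \<le> 2"
  proof (cases "i < m")
    case False
    then have z: "{y\<in>V. E x y \<and> cl x y = i} = {}" using cl by fastforce
    show ?thesis unfolding z by simp
  next
    case True
    have sub: "{y\<in>V. E x y \<and> cl x y = i} \<subseteq> {y\<in>V. a i x y} \<union> {y\<in>V. a i y x}"
      using cl by fastforce
    have c1: "card {y\<in>V. a i x y} \<le> 1"
      unfolding One_nat_def using fin D5[OF True] by (subst card_le_Suc0_iff_eq) (simp, blast)
    have c2: "card {y\<in>V. a i y x} \<le> 1"
      unfolding One_nat_def using fin D6[OF True] by (subst card_le_Suc0_iff_eq) (simp, blast)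
    have "card {y\<in>V. E x y \<and> cl x y = i} \<le> card ({y\<in>V. a i x y} \<union> {y\<in>V. a i y x})"
      by (rule card_mono[OF _ sub]) (use fin in simp)
    also have "\<dots> \<le> card {y\<in>V. a i x y} + card {y\<in>V. a i y x}" by (rule card_Un_le)
    finally show ?thesis using c1 c2 by simp
  qed
  finally show ?thesis by simp
qed

lemma ind_nonneg: "0 \<le> ind P" unfolding ind_def by simp

definition g1 where "g1 t t' s s' = ind (E s t \<and> E s t' \<and> cl s t = cl s t')"
definition g2 where "g2 t t' s s' = ind (E s t \<and> E t s' \<and> cl t s' = cl t s)"
definition g3 where "g3 t t' s s' = ind (E s t \<and> E t' s' \<and> cl t' s' = cl s t)"

lemma pointwise: "W m (CL t t' s s') * BB t t' s s' \<le> 2^m * (g1 t t' s s' + g2 t t' s s' + g3 t t' s s')"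
proof -
  have gnn: "0 \<le> g1 t t' s s' + g2 t t' s s' + g3 t t' s s'"
    unfolding g1_def g2_def g3_def by (simp add: ind_nonneg)
  show ?thesis
  proof (cases "E s t \<and> E s t' \<and> E s' t \<and> E s' t'")
    case False
    then have "BB t t' s s' = 0" unfolding BB_def using bb_zero by auto
    then show ?thesis using gnn by simp
  next
    case True
    have Babs: "\<bar>BB t t' s s'\<bar> \<le> 1" unfolding BB_def abs_mult
      using bb_abs by (intro mult_le_one) auto
    have lt: "cl s t < m" "cl s t' < m" "cl s' t < m" "cl s' t' < m" using cl True by auto
    have bnd: "W m (CL t t' s s') * BB t t' s s' \<le> 2^m"
    proof -
      have "W m (CL t t' s s') * BB t t' s s' \<le> \<bar>W m (CL t t' s s')\<bar> * \<bar>BB t t' s s'\<bar>"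
        by (metis abs_ge_self abs_mult)
      also have "\<dots> \<le> 2^m * 1" by (rule mult_mono) (use W_abs Babs in auto)
      finally show ?thesis by simp
    qed
    let ?c1 = "cl s t" and ?c2 = "cl s t'" and ?c3 = "cl s' t" and ?c4 = "cl s' t'"
    show ?thesis
    proof (cases "(?c1 = ?c2 \<and> ?c3 = ?c4) \<or> (?c1 = ?c3 \<and> ?c2 = ?c4) \<or> (?c1 = ?c4 \<and> ?c2 = ?c3)")
      case True
      have "1 \<le> g1 t t' s s' + g2 t t' s s' + g3 t t' s s'"
      proof -
        have "?c1 = ?c2 \<or> ?c1 = ?c3 \<or> ?c1 = ?c4" using True by blast
        moreover have "E t s'" "E t' s'" using \<open>E s t \<and> E s t' \<and> E s' t \<and> E s' t'\<close> gE by blast+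
        moreover have "cl t s' = ?c3" "cl t s = ?c1" "cl t' s' = ?c4" using cl_sym by auto
        ultimately have "g1 t t' s s' = 1 \<or> g2 t t' s s' = 1 \<or> g3 t t' s s' = 1"
          using \<open>E s t \<and> E s t' \<and> E s' t \<and> E s' t'\<close> unfolding g1_def g2_def g3_def ind_def by auto
        then show ?thesis unfolding g1_def g2_def g3_def by (auto simp: ind_nonneg add_increasing add_increasing2)
      qed
      then have h: "2^m * 1 \<le> 2^m * (g1 t t' s s' + g2 t t' s s' + g3 t t' s s')"
        by (intro mult_left_mono) auto
      show ?thesis using bnd h by linarith
    next
      case False
      then obtain x where x: "x \<in> {?c1, ?c2, ?c3, ?c4}" "odd (count_list [?c1, ?c2, ?c3, ?c4] x)"
        using paired4 by blast
      have "x < m" using x(1) lt by auto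
      then have "W m (CL t t' s s') = 0" using W_zero x(2) unfolding CL_def by blast
      then show ?thesis using gnn by simp
    qed
  qed
qed

end



lemma CS_sum:
  fixes x :: "'b \<Rightarrow> real"
  assumes "finite I"
  shows "(\<Sum>i\<in>I. x i)^2 \<le> real (card I) * (\<Sum>i\<in>I. (x i)^2)"
proof -
  have "0 \<le> (\<Sum>i\<in>I. \<Sum>j\<in>I. (x i - x j)^2)" by (intro sum_nonneg) auto
  also have "\<dots> = (\<Sum>i\<in>I. \<Sum>j\<in>I. (x i)^2 + (x j)^2 - 2 * (x i * x j))"
    by (simp add: power2_diff mult.assoc)
  also have "\<dots> = 2 * real (card I) * (\<Sum>i\<in>I. (x i)^2) - 2 * (\<Sum>i\<in>I. x i)^2"
    by (simp add: sum.distrib sum_subtractf sum_distrib_left sum_distrib_right power2_eq_square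
        sum_product algebra_simps)
  finally show ?thesis by simp
qed

context dec begin

lemma G1: "(\<Sum>t\<in>V. \<Sum>t'\<in>V. \<Sum>s\<in>V. \<Sum>s'\<in>V. g1 t t' s s') \<le> real (card V) * (real (card V) * (real (card V) * 2))"
proof (rule sum_le_const)
  fix t assume tV: "t \<in> V"
  have "(\<Sum>t'\<in>V. \<Sum>s\<in>V. \<Sum>s'\<in>V. g1 t t' s s') = (\<Sum>t'\<in>V. \<Sum>s\<in>V. real (card V) * ind (E s t \<and> E s t' \<and> cl s t = cl s t'))"
    unfolding g1_def by simp
  also have "\<dots> = (\<Sum>s\<in>V. \<Sum>t'\<in>V. real (card V) * ind (E s t \<and> E s t' \<and> cl s t = cl s t'))"
    by (rule sum.swap)
  also have "\<dots> \<le> real (card V) * (real (card V) * 2)"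
  proof (rule sum_le_const)
    fix s assume sV: "s \<in> V"
    have "(\<Sum>t'\<in>V. real (card V) * ind (E s t \<and> E s t' \<and> cl s t = cl s t')) =
        real (card V) * (\<Sum>t'\<in>V. ind (E s t \<and> E s t' \<and> cl s t = cl s t'))"
      by (simp add: sum_distrib_left)
    also have "(\<Sum>t'\<in>V. ind (E s t \<and> E s t' \<and> cl s t = cl s t')) \<le> (\<Sum>t'\<in>V. ind (E s t' \<and> cl s t' = cl s t))"
      by (rule sum_mono) (auto simp: ind_def)
    also have "\<dots> \<le> 2" by (rule nbr2)
    finally show "(\<Sum>t'\<in>V. real (card V) * ind (E s t \<and> E s t' \<and> cl s t = cl s t')) \<le> real (card V) * 2"
      by (simp add: mult_left_mono)
  qed
  finally show "(\<Sum>t'\<in>V. \<Sum>s\<in>V. \<Sum>s'\<in>V. g1 t t' s s') \<le> real (card V) * (real (card V) * 2)" .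
qed

lemma G2: "(\<Sum>t\<in>V. \<Sum>t'\<in>V. \<Sum>s\<in>V. \<Sum>s'\<in>V. g2 t t' s s') \<le> real (card V) * (real (card V) * (real (card V) * 2))"
proof (rule sum_le_const, rule sum_le_const, rule sum_le_const)
  fix t t' s
  have "(\<Sum>s'\<in>V. g2 t t' s s') \<le> (\<Sum>s'\<in>V. ind (E t s' \<and> cl t s' = cl t s))"
    unfolding g2_def by (rule sum_mono) (auto simp: ind_def)
  also have "\<dots> \<le> 2" by (rule nbr2)
  finally show "(\<Sum>s'\<in>V. g2 t t' s s') \<le> 2" .
qed

lemma G3: "(\<Sum>t\<in>V. \<Sum>t'\<in>V. \<Sum>s\<in>V. \<Sum>s'\<in>V. g3 t t' s s') \<le> real (card V) * (real (card V) * (real (card V) * 2))"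
proof (rule sum_le_const, rule sum_le_const, rule sum_le_const)
  fix t t' s
  have "(\<Sum>s'\<in>V. g3 t t' s s') \<le> (\<Sum>s'\<in>V. ind (E t' s' \<and> cl t' s' = cl s t))"
    unfolding g3_def by (rule sum_mono) (auto simp: ind_def)
  also have "\<dots> \<le> 2" by (rule nbr2)
  finally show "(\<Sum>s'\<in>V. g3 t t' s s') \<le> 2" .
qed

lemma sum_Phi: "(\<Sum>F\<in>Pow {..<m}. Phi F) \<le> 2^m * (6 * real (card V)^3)"
proof -
  let ?n = "real (card V)"
  have "(\<Sum>F\<in>Pow {..<m}. Phi F) = (\<Sum>t\<in>V. \<Sum>t'\<in>V. \<Sum>s\<in>V. \<Sum>s'\<in>V. \<Sum>F\<in>Pow {..<m}.
      prod_list (map (chi F) (CL t t' s s')) * BB t t' s s')"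
    unfolding Phi_expand by (rule swap5)
  also have "\<dots> = (\<Sum>t\<in>V. \<Sum>t'\<in>V. \<Sum>s\<in>V. \<Sum>s'\<in>V. W m (CL t t' s s') * BB t t' s s')"
    unfolding W_def by (simp add: sum_distrib_right)
  also have "\<dots> \<le> (\<Sum>t\<in>V. \<Sum>t'\<in>V. \<Sum>s\<in>V. \<Sum>s'\<in>V. 2^m * (g1 t t' s s' + g2 t t' s s' + g3 t t' s s'))"
    by (intro sum_mono pointwise)
  also have "\<dots> = 2^m * ((\<Sum>t\<in>V. \<Sum>t'\<in>V. \<Sum>s\<in>V. \<Sum>s'\<in>V. g1 t t' s s') +
      (\<Sum>t\<in>V. \<Sum>t'\<in>V. \<Sum>s\<in>V. \<Sum>s'\<in>V. g2 t t' s s') + (\<Sum>t\<in>V. \<Sum>t'\<in>V. \<Sum>s\<in>V. \<Sum>s'\<in>V. g3 t t' s s'))"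
  proof -
    have "(\<Sum>t\<in>V. \<Sum>t'\<in>V. \<Sum>s\<in>V. \<Sum>s'\<in>V. 2^m * (g1 t t' s s' + g2 t t' s s' + g3 t t' s s'))
       = 2^m * (\<Sum>t\<in>V. \<Sum>t'\<in>V. \<Sum>s\<in>V. \<Sum>s'\<in>V. (g1 t t' s s' + g2 t t' s s' + g3 t t' s s'))"
      by (simp only: sum_distrib_left)
    also have "\<dots> = 2^m * ((\<Sum>t\<in>V. \<Sum>t'\<in>V. \<Sum>s\<in>V. \<Sum>s'\<in>V. g1 t t' s s') +
      (\<Sum>t\<in>V. \<Sum>t'\<in>V. \<Sum>s\<in>V. \<Sum>s'\<in>V. g2 t t' s s') + (\<Sum>t\<in>V. \<Sum>t'\<in>V. \<Sum>s\<in>V. \<Sum>s'\<in>V. g3 t t' s s'))"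
      by (simp only: sum.distrib)
    finally show ?thesis .
  qed
  also have "\<dots> \<le> 2^m * (6 * ?n^3)"
  proof (rule mult_left_mono)
    show "(\<Sum>t\<in>V. \<Sum>t'\<in>V. \<Sum>s\<in>V. \<Sum>s'\<in>V. g1 t t' s s') +
      (\<Sum>t\<in>V. \<Sum>t'\<in>V. \<Sum>s\<in>V. \<Sum>s'\<in>V. g2 t t' s s') + (\<Sum>t\<in>V. \<Sum>t'\<in>V. \<Sum>s\<in>V. \<Sum>s'\<in>V. g3 t t' s s')
      \<le> 6 * ?n^3"
      using G1 G2 G3 by (simp add: power3_eq_cube)
  qed simp
  finally show ?thesis .
qed

lemma good_F: "\<exists>F. Phi F \<le> 6 * real (card V)^3"
proof (rule ccontr)
  assume "\<not> ?thesis"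
  then have h: "\<And>F. 6 * real (card V)^3 < Phi F" by (metis not_le)
  have "(\<Sum>F\<in>Pow {..<m}. 6 * real (card V)^3) < (\<Sum>F\<in>Pow {..<m}. Phi F)"
    by (rule sum_strict_mono) (use h in auto)
  then have "2^m * (6 * real (card V)^3) < (\<Sum>F\<in>Pow {..<m}. Phi F)" by (simp add: card_Pow)
  then show False using sum_Phi by simp
qed

lemma cut_bound:
  assumes S: "S \<subseteq> V" and T: "T \<subseteq> V"
  shows "(\<Sum>s\<in>S. \<Sum>t\<in>T. AA F s t)^4 \<le> real (card V)^4 * Phi F"
proof -
  let ?n = "real (card V)"
  have finS: "finite S" and finT: "finite T" using S T fin finite_subset by auto
  define X where "X = (\<lambda>s. \<Sum>t\<in>T. AA F s t)"
  define Y where "Y = (\<lambda>(t, t'). \<Sum>s\<in>V. AA F s t * AA F s t')"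
  define Q where "Q = (\<Sum>s\<in>V. (X s)^2)"
  have Q0: "0 \<le> Q" unfolding Q_def by (simp add: sum_nonneg)
  have cS: "real (card S) \<le> ?n" using card_mono[OF fin S] by simp
  have cT: "real (card T) \<le> ?n" using card_mono[OF fin T] by simp
  have step1: "(\<Sum>s\<in>S. X s)^2 \<le> ?n * Q"
  proof -
    have "(\<Sum>s\<in>S. X s)^2 \<le> real (card S) * (\<Sum>s\<in>S. (X s)^2)" by (rule CS_sum[OF finS])
    also have "\<dots> \<le> ?n * Q"
    proof (rule mult_mono)
      show "(\<Sum>s\<in>S. (X s)^2) \<le> Q" unfolding Q_def by (rule sum_mono2[OF fin S]) auto
    qed (use cS Q0 in \<open>auto simp: sum_nonneg\<close>)
    finally show ?thesis .
  qed
  have QY: "Q = (\<Sum>p\<in>T \<times> T. Y p)"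
  proof -
    have "Q = (\<Sum>s\<in>V. \<Sum>t\<in>T. \<Sum>t'\<in>T. AA F s t * AA F s t')"
      unfolding Q_def X_def power2_eq_square sum_product ..
    also have "\<dots> = (\<Sum>t\<in>T. \<Sum>t'\<in>T. \<Sum>s\<in>V. AA F s t * AA F s t')"
      apply (subst sum.swap[where A=V]) apply (rule sum.cong[OF refl]) apply (subst sum.swap[where A=V]) ..
    also have "\<dots> = (\<Sum>p\<in>T \<times> T. Y p)" unfolding Y_def by (rule sum.cartesian_product)
    finally show ?thesis .
  qed
  have step2: "Q^2 \<le> ?n^2 * Phi F"
  proof -
    have "Q^2 \<le> real (card (T \<times> T)) * (\<Sum>p\<in>T \<times> T. (Y p)^2)" unfolding QY
      by (rule CS_sum) (use finT in simp)
    also have "\<dots> \<le> ?n^2 * (\<Sum>p\<in>V \<times> V. (Y p)^2)"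
    proof (rule mult_mono)
      show "real (card (T \<times> T)) \<le> ?n^2" using cT by (simp add: card_cartesian_product power2_eq_square mult_mono)
      show "(\<Sum>p\<in>T \<times> T. (Y p)^2) \<le> (\<Sum>p\<in>V \<times> V. (Y p)^2)"
        by (rule sum_mono2) (use fin T in auto)
    qed (auto simp: sum_nonneg)
    also have "(\<Sum>p\<in>V \<times> V. (Y p)^2) = Phi F"
    proof -
      have e: "(\<lambda>p. (Y p)^2) = (\<lambda>(t,t'). (\<Sum>s\<in>V. AA F s t * AA F s t')^2)" by (auto simp: Y_def)
      show ?thesis unfolding Phi_def e by (rule sum.cartesian_product[symmetric])
    qed
    finally show ?thesis .
  qed
  have "(\<Sum>s\<in>S. X s)^4 = ((\<Sum>s\<in>S. X s)^2)^2" by simp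
  also have "\<dots> \<le> (?n * Q)^2" by (rule power_mono[OF step1]) simp
  also have "\<dots> = ?n^2 * Q^2" by (simp add: power_mult_distrib)
  also have "\<dots> \<le> ?n^2 * (?n^2 * Phi F)" by (rule mult_left_mono[OF step2]) simp
  finally show ?thesis unfolding X_def by (simp add: power_add[symmetric] mult.assoc[symmetric])
qed

end



lemma ecount_sum:
  assumes "finite S" "finite T"
  shows "real (e_count R S T) = (\<Sum>s\<in>S. \<Sum>t\<in>T. (if R s t then 1 else 0))"
proof -
  have eq: "{(s, t). s \<in> S \<and> t \<in> T \<and> R s t} = Sigma S (\<lambda>s. {t\<in>T. R s t})" by auto
  have "e_count R S T = (\<Sum>s\<in>S. card {t\<in>T. R s t})"
    unfolding e_count_def eq using assms by simp
  also have "real \<dots> = (\<Sum>s\<in>S. \<Sum>t\<in>T. (if R s t then 1 else 0))"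
    using assms(2) by (simp add: sum.inter_filter[symmetric])
  finally show ?thesis .
qed

lemma final_arith:
  fixes P e p eps :: real
  assumes "2 * e \<ge> (p - eps) * P - p / 2 * P" "0 < eps" "0 \<le> P"
  shows "(p / 4 - eps) * P \<le> e"
proof -
  have a: "0 \<le> eps * P" using assms by simp
  have b: "(p - eps) * P - p / 2 * P = p * P / 2 - eps * P" by (simp add: algebra_simps)
  have c: "(p / 4 - eps) * P = p * P / 4 - eps * P" by (simp add: algebra_simps)
  have d: "2 * e \<ge> p * P / 2 - eps * P" using assms(1) unfolding b .
  show ?thesis unfolding c using d a by linarith
qed

lemma main_graph:
  fixes p eps :: real and V :: "'a set"
  assumes p: "0 < p" and eps: "0 < eps"
    and g: "graph V E" and ev: "\<forall>v\<in>V. even (degree V E v)"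
    and lr: "lower_regular V E p eps"
    and n: "96 / (p^4 * eps^8) \<le> real (card V)"
  shows "\<exists>D. orientation E D \<and> (\<forall>v \<in> V. out_degree V D v = in_degree V D v) \<and>
            lower_regular V D (p / 4) eps"
proof -
  obtain m a where dc: "decomp V E m a" using decomp_exists[OF g ev] by blast
  interpret dec V E m a using g dc by unfold_locales
  obtain F where PF: "Phi F \<le> 6 * real (card V)^3" using good_F by blast
  define D where "D = Dor F"
  let ?n = "real (card V)"
  have npos: "0 < ?n"
  proof -
    have "0 < 96 / (p^4 * eps^8)" using p eps by simp
    then show ?thesis using n by linarith
  qed
  have lr': "lower_regular V D (p / 4) eps"
    unfolding lower_regular_def
  proof (intro allI impI)
    fix S T assume S: "S \<subseteq> V" and T: "T \<subseteq> V" and ST: "S \<inter> T = {}"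
      and cS: "eps * ?n \<le> real (card S)" and cT: "eps * ?n \<le> real (card T)"
    have finS: "finite S" and finT: "finite T" using S T fin finite_subset by auto
    let ?X = "\<Sum>s\<in>S. \<Sum>t\<in>T. AA F s t"
    let ?K = "p / 2 * eps^2 * ?n^2"
    have X4: "?X^4 \<le> 6 * ?n^7"
    proof -
      have "?X^4 \<le> ?n^4 * Phi F" by (rule cut_bound[OF S T])
      also have "\<dots> \<le> ?n^4 * (6 * ?n^3)" by (rule mult_left_mono[OF PF]) simp
      finally show ?thesis by (simp add: power_add[symmetric] algebra_simps)
    qed
    have K4: "6 * ?n^7 \<le> ?K^4"
    proof -
      have "96 \<le> p^4 * eps^8 * ?n" using n p eps by (simp add: divide_le_eq mult.commute)
      then have h: "96 * ?n^7 \<le> (p^4 * eps^8 * ?n) * ?n^7" by (rule mult_right_mono) simp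
      have K: "?K^4 = p^4 * eps^8 * ?n^8 / 16"
        by (simp add: power_mult_distrib power_divide flip: power_mult)
      have n8: "?n^8 = ?n * ?n^7" using power_Suc[of ?n 7] by simp
      have "(p^4 * eps^8 * ?n) * ?n^7 = p^4 * eps^8 * ?n^8" unfolding n8 by (simp only: mult.assoc)
      then show ?thesis using h K by linarith
    qed
    have XK: "\<bar>?X\<bar> \<le> ?K"
    proof (rule ccontr)
      assume "\<not> ?thesis"
      then have "?K < \<bar>?X\<bar>" by simp
      moreover have "0 \<le> ?K" using p by simp
      ultimately have "?K^4 < \<bar>?X\<bar>^4" by (rule power_strict_mono) simp
      then show False using X4 K4 by (simp add: power_abs)
    qed
    have STn: "eps^2 * ?n^2 \<le> real (card S) * real (card T)"
    proof -
      have "(eps * ?n) * (eps * ?n) \<le> real (card S) * real (card T)"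
        by (rule mult_mono[OF cS cT]) (use eps npos in auto)
      then show ?thesis by (simp add: power2_eq_square algebra_simps)
    qed
    have KST: "?K \<le> p / 2 * (real (card S) * real (card T))"
      using mult_left_mono[OF STn, of "p/2"] p by (simp add: algebra_simps)
    have eE: "(p - eps) * real (card S) * real (card T) \<le> real (e_count E S T)"
    proof -
      have key: "\<And>S T. S \<subseteq> V \<Longrightarrow> T \<subseteq> V \<Longrightarrow> S \<inter> T = {} \<Longrightarrow>
        real (card S) \<ge> eps * real (card V) \<Longrightarrow> real (card T) \<ge> eps * real (card V) \<Longrightarrow>
        real (e_count E S T) \<ge> (p - eps) * real (card S) * real (card T)"
        using lr unfolding lower_regular_def by blast
      show ?thesis by (rule key[OF S T ST cS cT])
    qed
    have ind_split: "\<And>s t. (if E s t then 1 else 0::real) = (if D s t then 1 else 0) + (if D t s then 1 else 0)"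
    proof -
      fix s t
      have "E s t = (D s t \<or> D t s)" "\<not> (D s t \<and> D t s)"
        using Dor_orient[of F] unfolding D_def orientation_def by blast+
      then show "(if E s t then 1 else 0::real) = (if D s t then 1 else 0) + (if D t s then 1 else 0)"
        by auto
    qed
    have AAi: "\<And>s t. AA F s t = (if D s t then 1 else 0) - (if D t s then 1 else 0)"
      unfolding AA_def D_def ..
    have "real (e_count E S T) = (\<Sum>s\<in>S. \<Sum>t\<in>T. (if D s t then 1 else 0)) + (\<Sum>s\<in>S. \<Sum>t\<in>T. (if D t s then 1 else 0))"
      unfolding ecount_sum[OF finS finT] ind_split by (simp add: sum.distrib)
    moreover have "?X = (\<Sum>s\<in>S. \<Sum>t\<in>T. (if D s t then 1 else 0)) - (\<Sum>s\<in>S. \<Sum>t\<in>T. (if D t s then 1 else 0))"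
      unfolding AAi by (simp add: sum_subtractf)
    moreover have "real (e_count D S T) = (\<Sum>s\<in>S. \<Sum>t\<in>T. (if D s t then 1 else 0))"
      by (rule ecount_sum[OF finS finT])
    ultimately have "2 * real (e_count D S T) = real (e_count E S T) + ?X" by simp
    moreover have "- ?X \<le> p / 2 * (real (card S) * real (card T))" using XK KST by linarith
    ultimately have "2 * real (e_count D S T) \<ge> (p - eps) * real (card S) * real (card T) - p / 2 * (real (card S) * real (card T))"
      using eE by linarith
    moreover have "0 \<le> real (card S) * real (card T)" by simp
    ultimately show "(p / 4 - eps) * real (card S) * real (card T) \<le> real (e_count D S T)"
      using final_arith[OF _ eps] by (simp add: mult.assoc)
  qed
  show ?thesis
    using Dor_orient Dor_euler lr' unfolding D_def by blast
qed



theorem lemma3p11: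
  fixes p \<alpha> :: real
  assumes "0 < p" "p < 1" "0 < \<alpha>" "\<alpha> < 1"
  shows "\<exists>eps0 > 0. \<forall>eps. 0 < eps \<and> eps \<le> eps0 \<longrightarrow>
    (\<exists>n0 :: nat. \<forall>(V :: nat set) E.
       graph V E \<and> card V \<ge> n0 \<and>
       (\<forall>v \<in> V. even (degree V E v)) \<and>
       lower_regular V E p eps \<and>
       (\<forall>v \<in> V. real (degree V E v) \<ge> \<alpha> * real (card V)) \<longrightarrow>
       (\<exists>D. orientation E D \<and>
            (\<forall>v \<in> V. out_degree V D v = in_degree V D v) \<and>
            lower_regular V D (p / 4) eps))"
proof (intro exI[of _ "1::real"] conjI allI impI)
  show "(0::real) < 1" by simp
  fix eps :: real assume eps: "0 < eps \<and> eps \<le> 1"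
  show "\<exists>n0 :: nat. \<forall>(V :: nat set) E.
       graph V E \<and> card V \<ge> n0 \<and>
       (\<forall>v \<in> V. even (degree V E v)) \<and>
       lower_regular V E p eps \<and>
       (\<forall>v \<in> V. real (degree V E v) \<ge> \<alpha> * real (card V)) \<longrightarrow>
       (\<exists>D. orientation E D \<and>
            (\<forall>v \<in> V. out_degree V D v = in_degree V D v) \<and>
            lower_regular V D (p / 4) eps)"
  proof (intro exI[of _ "nat \<lceil>96 / (p^4 * eps^8)\<rceil>"] allI impI)
    fix V :: "nat set" and E
    assume h: "graph V E \<and> nat \<lceil>96 / (p^4 * eps^8)\<rceil> \<le> card V \<and>
       (\<forall>v \<in> V. even (degree V E v)) \<and>
       lower_regular V E p eps \<and>
       (\<forall>v \<in> V. real (degree V E v) \<ge> \<alpha> * real (card V))"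
    have "96 / (p^4 * eps^8) \<le> real (nat \<lceil>96 / (p^4 * eps^8)\<rceil>)" by (rule real_nat_ceiling_ge)
    also have "\<dots> \<le> real (card V)"
    proof -
      have "nat \<lceil>96 / (p^4 * eps^8)\<rceil> \<le> card V" using h by blast
      then show ?thesis by (simp only: of_nat_le_iff)
    qed
    finally have n: "96 / (p^4 * eps^8) \<le> real (card V)" .
    show "\<exists>D. orientation E D \<and>
            (\<forall>v \<in> V. out_degree V D v = in_degree V D v) \<and>
            lower_regular V D (p / 4) eps"
      using main_graph[OF assms(1) _ _ _ _ n] eps h by blast
  qed
qed

end
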